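(* Let $k\in\mathbb{R}_{\ge0}$, let $(x_j,y_j,z_j)$ be a triple of the classical Euclid tree and $(X_j,Y_j,Z_j)$ the corresponding triple of the $k$-generalized Euclid tree, with comparison triple $(l_j,m_j,n_j)=(X_j/x_j,Y_j/y_j,Z_j/z_j)$. For $i\in\{1,2,3\}$ let $(l_{j+1},m_{j+1},n_{j+1})$ be the comparison triple of $\mathcal{M}_i(x_j,y_j,z_j)$ and $\mathcal{M}_{i;k}(X_j,Y_j,Z_j)$. Then: (1) if $m_j<n_j$ and $i=1$: $l_{j+1}\in[m_j,n_j]\iff k\le y_j(n_j-m_j)$; (2) if $n_j<m_j$ and $i=1$: $l_{j+1}\in[n_j,m_j]\iff k\le z_j(m_j-n_j)$; (3) if $l_j<n_j$ and $i=2$: $m_{j+1}\in[l_j,n_j]\iff k\le x_j(n_j-l_j)$; (4) if $n_j<l_j$ and $i=2$: $m_{j+1}\in[n_j,l_j]\iff k\le z_j(l_j-n_j)$; (5) if $l_j<m_j$ and $i=3$: $n_{j+1}\in[l_j,m_j]\iff k\le x_j(m_j-l_j)$; (6) if $m_j<l_j$ and $i=3$: $n_{j+1}\in[m_j,l_j]\iff k\le y_j(l_j-m_j)$. Moreover, if the inequality for $k$ holds strictly, the mutated component lies in the corresponding open interval.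
   Context: For $k\in\mathbb{R}_{\ge0}$: $\mathcal{M}_{1;k}(X,Y,Z)=(k+Y+Z,Y,Z)$, $\mathcal{M}_{2;k}(X,Y,Z)=(X,k+X+Z,Z)$, $\mathcal{M}_{3;k}(X,Y,Z)=(X,Y,k+X+Y)$ on $\mathbb{R}_+^3$, and $\mathcal{M}_i=\mathcal{M}_{i;0}$. The classical Euclid tree consists of the triples obtained from a $0$-initial triple $(a,b,c)\in\mathbb{R}_+^3$ by compositions of $\mathcal{M}_i$ along finite reduced sequences (consecutive indices distinct), and the $k$-generalized Euclid tree those obtained from a $k$-initial triple $(A,B,C)\in\mathbb{R}_+^3$ ($A\ne B+C+k$, $B\ne A+C+k$, $C\ne A+B+k$) by compositions of $\mathcal{M}_{i;k}$; corresponding triples are those obtained by the same sequence of indices. *)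

theory Defs
  imports Main "HOL.Real"
begin

type_synonym triple = "real \<times> real \<times> real"

text \<open>The mutation M_{i;k}; M_i is M_{i;0}.\<close>
fun mut :: "real \<Rightarrow> nat \<Rightarrow> triple \<Rightarrow> triple" where
  "mut k i (X, Y, Z) =
     (if i = 1 then (k + Y + Z, Y, Z)
      else if i = 2 then (X, k + X + Z, Z)
      else if i = 3 then (X, Y, k + X + Y)
      else (X, Y, Z))"

definition mut_seq :: "real \<Rightarrow> nat list \<Rightarrow> triple \<Rightarrow> triple" where
  "mut_seq k s t = foldl (\<lambda>u i. mut k i u) t s"

definition reduced_seq :: "nat list \<Rightarrow> bool" where
  "reduced_seq s \<longleftrightarrow> set s \<subseteq> {1,2,3} \<and> (\<forall>j. Suc j < length s \<longrightarrow> s ! j \<noteq> s ! Suc j)"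

definition pos_triple :: "triple \<Rightarrow> bool" where
  "pos_triple t \<longleftrightarrow> (case t of (A, B, C) \<Rightarrow> A > 0 \<and> B > 0 \<and> C > 0)"

definition k_initial :: "real \<Rightarrow> triple \<Rightarrow> bool" where
  "k_initial k t \<longleftrightarrow> pos_triple t \<and>
     (case t of (A, B, C) \<Rightarrow> A \<noteq> B + C + k \<and> B \<noteq> A + C + k \<and> C \<noteq> A + B + k)"

fun comp_triple :: "triple \<Rightarrow> triple \<Rightarrow> triple" where
  "comp_triple (x, y, z) (X, Y, Z) = (X / x, Y / y, Z / z)"

end

theory Submission
  imports Defs
begin

lemma pos_mut: "k \<ge> 0 \<Longrightarrow> pos_triple t \<Longrightarrow> pos_triple (mut k i t)"
  by (cases t) (auto simp: pos_triple_def)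

lemma pos_mut_seq: "k \<ge> 0 \<Longrightarrow> pos_triple t \<Longrightarrow> pos_triple (mut_seq k s t)"
proof (induction s arbitrary: t)
  case Nil then show ?case by (simp add: mut_seq_def)
next
  case (Cons a s) then show ?case by (simp add: mut_seq_def pos_mut)
qed

theorem lemma4p2:
  fixes k :: real and s :: "nat list" and i :: nat
    and a b c A B C x y z X Y Z l m n l' m' n' :: real
  assumes hk: "k \<ge> 0"
    and init0: "k_initial 0 (a, b, c)"
    and initk: "k_initial k (A, B, C)"
    and red: "reduced_seq s"
    and cl: "mut_seq 0 s (a, b, c) = (x, y, z)"
    and gen: "mut_seq k s (A, B, C) = (X, Y, Z)"
    and cmp: "comp_triple (x, y, z) (X, Y, Z) = (l, m, n)"
    and hi: "i \<in> {1, 2, 3}"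
    and cmp': "comp_triple (mut 0 i (x, y, z)) (mut k i (X, Y, Z)) = (l', m', n')"
  shows
   "(m < n \<and> i = 1 \<longrightarrow> (l' \<in> {m..n} \<longleftrightarrow> k \<le> y * (n - m)) \<and> (k < y * (n - m) \<longrightarrow> l' \<in> {m<..<n})) \<and>
    (n < m \<and> i = 1 \<longrightarrow> (l' \<in> {n..m} \<longleftrightarrow> k \<le> z * (m - n)) \<and> (k < z * (m - n) \<longrightarrow> l' \<in> {n<..<m})) \<and>
    (l < n \<and> i = 2 \<longrightarrow> (m' \<in> {l..n} \<longleftrightarrow> k \<le> x * (n - l)) \<and> (k < x * (n - l) \<longrightarrow> m' \<in> {l<..<n})) \<and>
    (n < l \<and> i = 2 \<longrightarrow> (m' \<in> {n..l} \<longleftrightarrow> k \<le> z * (l - n)) \<and> (k < z * (l - n) \<longrightarrow> m' \<in> {n<..<l})) \<and>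
    (l < m \<and> i = 3 \<longrightarrow> (n' \<in> {l..m} \<longleftrightarrow> k \<le> x * (m - l)) \<and> (k < x * (m - l) \<longrightarrow> n' \<in> {l<..<m})) \<and>
    (m < l \<and> i = 3 \<longrightarrow> (n' \<in> {m..l} \<longleftrightarrow> k \<le> y * (l - m)) \<and> (k < y * (l - m) \<longrightarrow> n' \<in> {m<..<l}))"
proof -
  have "pos_triple (x, y, z)"
    using pos_mut_seq[of 0 "(a,b,c)" s] init0 cl by (simp add: k_initial_def)
  hence p: "x > 0" "y > 0" "z > 0" by (auto simp: pos_triple_def)
  from cmp have e: "X = l * x" "Y = m * y" "Z = n * z" using p by auto
  show ?thesis
  proof (intro conjI impI)
    assume h: "m < n \<and> i = 1"
    hence l': "l' = (k + m*y + n*z) / (y + z)" using cmp' e by auto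
    have "l' > m" using h p hk mult_strict_right_mono[of m n z] unfolding l'
      by (simp add: field_simps) (smt (verit) mult_strict_right_mono h p)
    moreover have "l' \<le> n \<longleftrightarrow> k \<le> y * (n - m)" "l' < n \<longleftrightarrow> k < y * (n - m)" using p unfolding l'
      by (simp_all add: field_simps)
    ultimately show "(l' \<in> {m..n} \<longleftrightarrow> k \<le> y * (n - m))" "k < y * (n - m) \<Longrightarrow> l' \<in> {m<..<n}" by auto
  next
    assume h: "n < m \<and> i = 1"
    hence l': "l' = (k + m*y + n*z) / (y + z)" using cmp' e by auto
    have "l' > n" using h p hk mult_strict_right_mono[of n m y] unfolding l'
      by (simp add: field_simps) (smt (verit) mult_strict_right_mono h p)
    moreover have "l' \<le> m \<longleftrightarrow> k \<le> z * (m - n)" "l' < m \<longleftrightarrow> k < z * (m - n)" using p unfolding l'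
      by (simp_all add: field_simps)
    ultimately show "(l' \<in> {n..m} \<longleftrightarrow> k \<le> z * (m - n))" "k < z * (m - n) \<Longrightarrow> l' \<in> {n<..<m}" by auto
  next
    assume h: "l < n \<and> i = 2"
    hence m': "m' = (k + l*x + n*z) / (x + z)" using cmp' e by auto
    have "m' > l" using h p hk mult_strict_right_mono[of l n z] unfolding m'
      by (simp add: field_simps) (smt (verit) mult_strict_right_mono h p)
    moreover have "m' \<le> n \<longleftrightarrow> k \<le> x * (n - l)" "m' < n \<longleftrightarrow> k < x * (n - l)" using p unfolding m'
      by (simp_all add: field_simps)
    ultimately show "(m' \<in> {l..n} \<longleftrightarrow> k \<le> x * (n - l))" "k < x * (n - l) \<Longrightarrow> m' \<in> {l<..<n}" by auto
  next
    assume h: "n < l \<and> i = 2"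
    hence m': "m' = (k + l*x + n*z) / (x + z)" using cmp' e by auto
    have "m' > n" using h p hk mult_strict_right_mono[of n l x] unfolding m'
      by (simp add: field_simps) (smt (verit) mult_strict_right_mono h p)
    moreover have "m' \<le> l \<longleftrightarrow> k \<le> z * (l - n)" "m' < l \<longleftrightarrow> k < z * (l - n)" using p unfolding m'
      by (simp_all add: field_simps)
    ultimately show "(m' \<in> {n..l} \<longleftrightarrow> k \<le> z * (l - n))" "k < z * (l - n) \<Longrightarrow> m' \<in> {n<..<l}" by auto
  next
    assume h: "l < m \<and> i = 3"
    hence n': "n' = (k + l*x + m*y) / (x + y)" using cmp' e by auto
    have "n' > l" using h p hk mult_strict_right_mono[of l m y] unfolding n'
      by (simp add: field_simps) (smt (verit) mult_strict_right_mono h p)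
    moreover have "n' \<le> m \<longleftrightarrow> k \<le> x * (m - l)" "n' < m \<longleftrightarrow> k < x * (m - l)" using p unfolding n'
      by (simp_all add: field_simps)
    ultimately show "(n' \<in> {l..m} \<longleftrightarrow> k \<le> x * (m - l))" "k < x * (m - l) \<Longrightarrow> n' \<in> {l<..<m}" by auto
  next
    assume h: "m < l \<and> i = 3"
    hence n': "n' = (k + l*x + m*y) / (x + y)" using cmp' e by auto
    have "n' > m" using h p hk mult_strict_right_mono[of m l x] unfolding n'
      by (simp add: field_simps) (smt (verit) mult_strict_right_mono h p)
    moreover have "n' \<le> l \<longleftrightarrow> k \<le> y * (l - m)" "n' < l \<longleftrightarrow> k < y * (l - m)" using p unfolding n'
      by (simp_all add: field_simps)
    ultimately show "(n' \<in> {m..l} \<longleftrightarrow> k \<le> y * (l - m))" "k < y * (l - m) \<Longrightarrow> n' \<in> {m<..<l}" by auto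
  qed
qed

end
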